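(* Let $q\ge2$, let $U_1,\dots,U_q\in U(q)$ be arbitrary and let $D=\sum_{j=1}^q|j\rangle\langle j|\otimes U_j$ (the block-diagonal unitary $\bigoplus_j U_j$). Then $SD$ and $DS$ are dual-unitary, and $$\mathcal{M}_+^{DS}(a)_{jk}=\frac1q\operatorname{tr}(U_j^\dagger U_k)\,a_{jk}\quad(1\le j,k\le q),\qquad \mathcal{M}_+^{SD}(a)=\frac1q\sum_{j=1}^q U_j^\dagger a\,U_j .$$ In particular the eigenvalues of $\mathcal{M}_+^{DS}$ are the $q^2$ numbers $\frac1q\operatorname{tr}(U_j^\dagger U_k)$, $1\le j,k\le q$; at least $q$ of them equal $1$, and if the $U_j$ are pairwise orthogonal in the Hilbert–Schmidt inner product then all the others are $0$.
   Context: Product basis $|i\alpha\rangle$ of $\mathbb{C}^q\otimes\mathbb{C}^q$; realignment $\langle\beta\alpha|X^{R_1}|ji\rangle=\langle i\alpha|X|j\beta\rangle$; a unitary $U$ is dual-unitary if $U^{R_1}$ is unitary. $S$ is the swap operator. For unitary $U$, $\mathcal{M}_+^U(a)=\frac1q\operatorname{tr}_1[U^\dagger(a\otimes I)U]$ for $q\times q$ matrices $a$, where $\operatorname{tr}_1$ is the partial trace over the first factor. *)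

theory Defs
  imports Complex_Main "Jordan_Normal_Form.Matrix" "Jordan_Normal_Form.Char_Poly"
begin

text \<open>Conventions: all indices are 0-based. The product basis vector |i alpha> of
  C^q (x) C^q (i, alpha < q) is the standard basis vector with index i*q + alpha.\<close>

definition adj :: "complex mat \<Rightarrow> complex mat" where
  "adj A = mat (dim_col A) (dim_row A) (\<lambda>(i,j). cnj (A $$ (j,i)))"

definition tr :: "complex mat \<Rightarrow> complex" where
  "tr A = (\<Sum>i<dim_row A. A $$ (i,i))"

definition unitary_mat :: "nat \<Rightarrow> complex mat \<Rightarrow> bool" where
  "unitary_mat n U \<longleftrightarrow> U \<in> carrier_mat n n \<and> adj U * U = 1\<^sub>m n \<and> U * adj U = 1\<^sub>m n"

text \<open>Realignment: <beta alpha| X^R |j i> = <i alpha| X |j beta>.\<close>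
definition realign :: "nat \<Rightarrow> complex mat \<Rightarrow> complex mat" where
  "realign q X = mat (q*q) (q*q)
     (\<lambda>(r,c). X $$ ((c mod q) * q + r mod q, (c div q) * q + r div q))"

definition dual_unitary :: "nat \<Rightarrow> complex mat \<Rightarrow> bool" where
  "dual_unitary q U \<longleftrightarrow> unitary_mat (q*q) U \<and> unitary_mat (q*q) (realign q U)"

text \<open>Swap operator: S |j beta> = |beta j>.\<close>
definition swap_op :: "nat \<Rightarrow> complex mat" where
  "swap_op q = mat (q*q) (q*q)
     (\<lambda>(r,c). if r div q = c mod q \<and> r mod q = c div q then 1 else 0)"

definition tensor :: "nat \<Rightarrow> complex mat \<Rightarrow> complex mat \<Rightarrow> complex mat" where
  "tensor q A B = mat (q*q) (q*q)
     (\<lambda>(r,c). A $$ (r div q, c div q) * B $$ (r mod q, c mod q))"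

definition ptrace1 :: "nat \<Rightarrow> complex mat \<Rightarrow> complex mat" where
  "ptrace1 q X = mat q q (\<lambda>(a,b). \<Sum>i<q. X $$ (i*q + a, i*q + b))"

definition M_plus :: "nat \<Rightarrow> complex mat \<Rightarrow> complex mat \<Rightarrow> complex mat" where
  "M_plus q U a = (1 / of_nat q) \<cdot>\<^sub>m ptrace1 q (adj U * tensor q a (1\<^sub>m q) * U)"

definition block_diag :: "nat \<Rightarrow> (nat \<Rightarrow> complex mat) \<Rightarrow> complex mat" where
  "block_diag q U = mat (q*q) (q*q)
     (\<lambda>(r,c). if r div q = c div q then U (r div q) $$ (r mod q, c mod q) else 0)"

definition mat_unit :: "nat \<Rightarrow> nat \<Rightarrow> nat \<Rightarrow> complex mat" where
  "mat_unit q j k = mat q q (\<lambda>(a,b). if a = j \<and> b = k then 1 else 0)"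

text \<open>Matrix (q^2 x q^2) of a linear map on q x q matrices w.r.t. the basis E_{jk}
  (basis element E_{jk} has index j*q + k).\<close>
definition superop_mat :: "nat \<Rightarrow> (complex mat \<Rightarrow> complex mat) \<Rightarrow> complex mat" where
  "superop_mat q M = mat (q*q) (q*q)
     (\<lambda>(r,c). (M (mat_unit q (c div q) (c mod q))) $$ (r div q, r mod q))"

end

theory Submission imports Defs begin

lemma dm: "a < q \<Longrightarrow> (i*q+a) div q = (i::nat)" "a < q \<Longrightarrow> (i*q+a) mod q = (a::nat)"
  by auto

lemma lt_pair: "i < q \<Longrightarrow> b < q \<Longrightarrow> i*q+b < q*(q::nat)"
proof -
  assume "i < q" "b < q"
  hence "i*q+b < (i+1)*q" by simp
  also have "\<dots> \<le> q*q" using \<open>i<q\<close> by (intro mult_le_mono1) simp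
  finally show ?thesis .
qed

lemma bij_pairs: "bij_betw (\<lambda>(i,a). i*q+a) ({..<q}\<times>{..<(q::nat)}) {..<q*q}"
proof (rule bij_betw_imageI)
  show "inj_on (\<lambda>(i, a). i * q + a) ({..<q} \<times> {..<q})"
    unfolding inj_on_def
  proof (clarsimp)
    fix i a j b assume h: "i<q" "a<q" "j<q" "b<q" "i*q+a = j*q+b"
    hence "(i*q+a) div q = (j*q+b) div q" "(i*q+a) mod q = (j*q+b) mod q" by simp_all
    thus "i = j \<and> a = b" using h(2,4) by (simp only: dm)
  qed
  show "(\<lambda>(i, a). i * q + a) ` ({..<q} \<times> {..<q}) = {..<q * q}"
  proof
    show "(\<lambda>(i, a). i * q + a) ` ({..<q} \<times> {..<q}) \<subseteq> {..<q * q}"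
      using lt_pair by auto
    show "{..<q * q} \<subseteq> (\<lambda>(i, a). i * q + a) ` ({..<q} \<times> {..<q})"
    proof
      fix k assume k: "k \<in> {..<q*q}"
      hence "q > 0" by (cases q) auto
      hence "k = (k div q) * q + k mod q" "k div q < q" "k mod q < q" using k
        by (auto simp: less_mult_imp_div_less)
      thus "k \<in> (\<lambda>(i, a). i * q + a) ` ({..<q} \<times> {..<q})"
        by (intro image_eqI[of _ _ "(k div q, k mod q)"]) auto
    qed
  qed
qed

lemma sum_pairs: "(\<Sum>k<q*q. f k) = (\<Sum>i<(q::nat). \<Sum>a<q. f (i*q+a))"
proof -
  have "(\<Sum>k<q*q. f k) = (\<Sum>x\<in>{..<q}\<times>{..<q}. f ((\<lambda>(i,a). i*q+a) x))"
    using sum.reindex_bij_betw[OF bij_pairs, of f] by simp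
  also have "\<dots> = (\<Sum>i<(q::nat). \<Sum>a<q. f (i*q+a))"
    by (simp add: sum.cartesian_product case_prod_beta)
  finally show ?thesis .
qed

lemma prod_pairs: "(\<Prod>k<q*q. f k) = (\<Prod>x\<in>{..<q}\<times>{..<(q::nat)}. f ((\<lambda>(i,a). i*q+a) x))"
  using prod.reindex_bij_betw[OF bij_pairs, of f] by simp

lemma rc: "r < q*q \<Longrightarrow> r div q < (q::nat)" "r < q*q \<Longrightarrow> r mod q < (q::nat)"
  "r < q*q \<Longrightarrow> (r div q)*q + r mod q = r"
  by (auto simp: less_mult_imp_div_less) (metis mod_less_divisor mult_0_right neq0_conv not_less0)

lemma mult_entry: "A \<in> carrier_mat n m \<Longrightarrow> B \<in> carrier_mat m p \<Longrightarrow> i<n \<Longrightarrow> j<p \<Longrightarrow>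
  (A*B)$$(i,j) = (\<Sum>k<m. A$$(i,k) * B$$(k,j))"
  by (simp add: scalar_prod_def atLeast0LessThan)

definition sw :: "nat \<Rightarrow> nat \<Rightarrow> nat" where "sw q r = (r mod q)*q + r div q"

lemma sw_lt: "r < q*q \<Longrightarrow> sw q r < q*q"
  unfolding sw_def using rc[of r q] lt_pair by auto

lemma S_entry: assumes "r < q*q" "k < q*q"
  shows "swap_op q $$ (r,k) = (if k = sw q r then 1 else 0)"
proof -
  have "(r div q = k mod q \<and> r mod q = k div q) \<longleftrightarrow> k = sw q r"
    using rc[OF assms(1)] rc[OF assms(2)] dm[of "r div q" q "r mod q"] unfolding sw_def by metis
  thus ?thesis using assms unfolding swap_op_def by (simp only: index_mat split)
qed

lemma S_carrier[simp]: "swap_op q \<in> carrier_mat (q*q) (q*q)"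
  unfolding swap_op_def by simp

lemma bd_carrier[simp]: "block_diag q A \<in> carrier_mat (q*q) (q*q)"
  unfolding block_diag_def by simp

lemma tensor_carrier[simp]: "tensor q A B \<in> carrier_mat (q*q) (q*q)"
  unfolding tensor_def by simp

lemma S_dim[simp]: "dim_row (swap_op q) = q*q" "dim_col (swap_op q) = q*q"
  unfolding swap_op_def by simp_all

lemma bd_dim[simp]: "dim_row (block_diag q A) = q*q" "dim_col (block_diag q A) = q*q"
  unfolding block_diag_def by simp_all

lemma adj_carrier[simp]: "A \<in> carrier_mat n m \<Longrightarrow> adj A \<in> carrier_mat m n"
  unfolding adj_def by simp

lemma adj_dims[simp]: "dim_row (adj A) = dim_col A" "dim_col (adj A) = dim_row A"
  unfolding adj_def by simp_all

lemma LS: assumes X: "X \<in> carrier_mat (q*q) m" and r: "r < q*q" and c: "c < m"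
  shows "(swap_op q * X) $$ (r,c) = X $$ (sw q r, c)"
proof -
  have "(swap_op q * X) $$ (r,c) = (\<Sum>k<q*q. swap_op q $$ (r,k) * X $$ (k,c))"
    using mult_entry[OF S_carrier X r c] .
  also have "\<dots> = (\<Sum>k<q*q. (if k = sw q r then X $$ (k,c) else 0))"
    by (rule sum.cong) (use r in \<open>auto simp: S_entry\<close>)
  also have "\<dots> = X $$ (sw q r, c)" using sw_lt[OF r] by simp
  finally show ?thesis .
qed

lemma RS: assumes X: "X \<in> carrier_mat m (q*q)" and r: "r < m" and c: "c < q*q"
  shows "(X * swap_op q) $$ (r,c) = X $$ (r, sw q c)"
proof -
  have "(X * swap_op q) $$ (r,c) = (\<Sum>k<q*q. X $$ (r,k) * swap_op q $$ (k,c))"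
    using mult_entry[OF X S_carrier r c] .
  also have "\<dots> = (\<Sum>k<q*q. (if k = sw q c then X $$ (r,k) else 0))"
  proof (rule sum.cong)
    fix k assume k: "k \<in> {..<q*q}"
    have "swap_op q $$ (k,c) = (if k = sw q c then 1 else 0)"
      using S_entry[of k q c] S_entry[of c q k] k c rc[of k q] rc[of c q] dm[of _ q]
      unfolding sw_def by auto
    thus "X $$ (r, k) * swap_op q $$ (k, c) = (if k = sw q c then X $$ (r, k) else 0)" by simp
  qed simp
  also have "\<dots> = X $$ (r, sw q c)" using sw_lt[OF c] by simp
  finally show ?thesis .
qed

lemma bd_entry: "r < q*q \<Longrightarrow> c < q*q \<Longrightarrow> block_diag q A $$ (r,c) =
   (if r div q = c div q then A (r div q) $$ (r mod q, c mod q) else 0)"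
  unfolding block_diag_def by simp

lemma bd_entry1: "r < q*q \<Longrightarrow> i < q \<Longrightarrow> b < q \<Longrightarrow>
   block_diag q A $$ (r, i*q+b) = (if r div q = i then A i $$ (r mod q, b) else 0)"
  using lt_pair[of i q b] by (simp add: bd_entry dm)

lemma bd_entry2: "c < q*q \<Longrightarrow> i < q \<Longrightarrow> b < q \<Longrightarrow>
   block_diag q A $$ (i*q+b, c) = (if i = c div q then A i $$ (b, c mod q) else 0)"
  using lt_pair[of i q b] by (simp add: bd_entry dm)

lemma LD: assumes X: "X \<in> carrier_mat (q*q) m" and r: "r < q*q" and c: "c < m"
  shows "(block_diag q A * X) $$ (r,c) = (\<Sum>b<q. A (r div q) $$ (r mod q, b) * X $$ ((r div q)*q + b, c))"
proof -
  have "(block_diag q A * X) $$ (r,c) = (\<Sum>k<q*q. block_diag q A $$ (r,k) * X $$ (k,c))"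
    using mult_entry[OF bd_carrier X r c] .
  also have "\<dots> = (\<Sum>i<q. \<Sum>b<q. block_diag q A $$ (r,i*q+b) * X $$ (i*q+b,c))"
    by (rule sum_pairs)
  also have "\<dots> = (\<Sum>i<q. if i = r div q then (\<Sum>b<q. A (r div q) $$ (r mod q, b) * X $$ ((r div q)*q + b, c)) else 0)"
  proof (rule sum.cong)
    fix i assume i: "i \<in> {..<q}"
    show "(\<Sum>b<q. block_diag q A $$ (r,i*q+b) * X $$ (i*q+b,c)) = (if i = r div q then (\<Sum>b<q. A (r div q) $$ (r mod q, b) * X $$ ((r div q)*q + b, c)) else 0)"
    proof (cases "i = r div q")
      case True
      then show ?thesis using i r by (simp add: bd_entry1)
    next
      case False
      hence "r div q \<noteq> i" by simp
      then show ?thesis using i r False by (simp add: bd_entry1)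
    qed
  qed simp
  also have "\<dots> = (\<Sum>b<q. A (r div q) $$ (r mod q, b) * X $$ ((r div q)*q + b, c))"
    using rc[OF r] by simp
  finally show ?thesis .
qed

lemma RD: assumes X: "X \<in> carrier_mat m (q*q)" and r: "r < m" and c: "c < q*q"
  shows "(X * block_diag q A) $$ (r,c) = (\<Sum>b<q. X $$ (r, (c div q)*q + b) * A (c div q) $$ (b, c mod q))"
proof -
  have "(X * block_diag q A) $$ (r,c) = (\<Sum>k<q*q. X $$ (r,k) * block_diag q A $$ (k,c))"
    using mult_entry[OF X bd_carrier r c] .
  also have "\<dots> = (\<Sum>i<q. \<Sum>b<q. X $$ (r,i*q+b) * block_diag q A $$ (i*q+b,c))"
    by (rule sum_pairs)
  also have "\<dots> = (\<Sum>i<q. if i = c div q then (\<Sum>b<q. X $$ (r, (c div q)*q + b) * A (c div q) $$ (b, c mod q)) else 0)"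
  proof (rule sum.cong)
    fix i assume i: "i \<in> {..<q}"
    show "(\<Sum>b<q. X $$ (r,i*q+b) * block_diag q A $$ (i*q+b,c)) = (if i = c div q then (\<Sum>b<q. X $$ (r, (c div q)*q + b) * A (c div q) $$ (b, c mod q)) else 0)"
    proof (cases "i = c div q")
      case True
      then show ?thesis using i c by (simp add: bd_entry2)
    next
      case False
      then show ?thesis using i c False by (simp add: bd_entry2)
    qed
  qed simp
  also have "\<dots> = (\<Sum>b<q. X $$ (r, (c div q)*q + b) * A (c div q) $$ (b, c mod q))"
    using rc[OF c] by simp
  finally show ?thesis .
qed


lemma adj_entry: "i < dim_col A \<Longrightarrow> j < dim_row A \<Longrightarrow> adj A $$ (i,j) = cnj (A $$ (j,i))"
  by (simp add: adj_def)

lemma adj_mult: assumes A: "A \<in> carrier_mat n m" and B: "B \<in> carrier_mat m p"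
  shows "adj (A*B) = adj B * adj A"
proof (rule eq_matI)
  fix i j assume i: "i < dim_row (adj B * adj A)" and j: "j < dim_col (adj B * adj A)"
  hence i': "i < p" and j': "j < n" using A B by auto
  have "adj (A*B) $$ (i,j) = cnj ((A*B) $$ (j,i))" using i' j' A B by (simp add: adj_entry)
  also have "\<dots> = cnj (\<Sum>k<m. A $$ (j,k) * B $$ (k,i))" using mult_entry[OF A B j' i'] by simp
  also have "\<dots> = (\<Sum>k<m. adj B $$ (i,k) * adj A $$ (k,j))"
    using A B i' j' by (simp add: adj_entry mult.commute)
  also have "\<dots> = (adj B * adj A) $$ (i,j)"
    using mult_entry[OF adj_carrier[OF B] adj_carrier[OF A] i' j'] by simp
  finally show "adj (A*B) $$ (i,j) = (adj B * adj A) $$ (i,j)" .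
qed (use A B in auto)

lemma adj_S: "adj (swap_op q) = swap_op q"
  by (rule eq_matI) (auto simp: adj_def swap_op_def)

lemma sw_sw: "r < q*q \<Longrightarrow> sw q (sw q r) = r"
  unfolding sw_def using rc[of r q] dm by simp

lemma SS: "swap_op q * swap_op q = 1\<^sub>m (q*q)"
proof (rule eq_matI)
  fix r c assume r: "r < dim_row (1\<^sub>m (q*q))" and c: "c < dim_col (1\<^sub>m (q*q))"
  hence r': "r < q*q" and c': "c < q*q" by auto
  have "(swap_op q * swap_op q) $$ (r,c) = swap_op q $$ (sw q r, c)"
    using LS[OF S_carrier r' c'] .
  also have "\<dots> = (if c = r then 1 else 0)" using S_entry[OF sw_lt[OF r'] c'] sw_sw[OF r'] by simp
  finally show "(swap_op q * swap_op q) $$ (r,c) = 1\<^sub>m (q*q) $$ (r,c)" using r' c' by auto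
qed auto

lemma adj_bd: assumes "\<And>j. j < q \<Longrightarrow> A j \<in> carrier_mat q q"
  shows "adj (block_diag q A) = block_diag q (\<lambda>j. adj (A j))"
proof (rule eq_matI)
  fix r c assume "r < dim_row (block_diag q (\<lambda>j. adj (A j)))" "c < dim_col (block_diag q (\<lambda>j. adj (A j)))"
  hence r: "r < q*q" and c: "c < q*q" by (auto simp: block_diag_def)
  show "adj (block_diag q A) $$ (r,c) = block_diag q (\<lambda>j. adj (A j)) $$ (r,c)"
    using r c rc[OF r] rc[OF c] assms[of "r div q"] by (auto simp: adj_entry bd_entry)
qed (auto simp: adj_def block_diag_def)

lemma bd_mult: assumes A: "\<And>j. j < q \<Longrightarrow> A j \<in> carrier_mat q q" and B: "\<And>j. j < q \<Longrightarrow> B j \<in> carrier_mat q q"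
  shows "block_diag q A * block_diag q B = block_diag q (\<lambda>j. A j * B j)"
proof (rule eq_matI)
  fix r c assume "r < dim_row (block_diag q (\<lambda>j. A j * B j))" "c < dim_col (block_diag q (\<lambda>j. A j * B j))"
  hence r: "r < q*q" and c: "c < q*q" by (auto simp: block_diag_def)
  have "(block_diag q A * block_diag q B) $$ (r,c) = (\<Sum>b<q. A (r div q) $$ (r mod q, b) * block_diag q B $$ ((r div q)*q + b, c))"
    using LD[OF bd_carrier r c] .
  also have "\<dots> = (\<Sum>b<q. A (r div q) $$ (r mod q, b) * (if r div q = c div q then B (r div q) $$ (b, c mod q) else 0))"
    using rc[OF r] c by (intro sum.cong) (auto simp: bd_entry2)
  also have "\<dots> = (if r div q = c div q then (A (r div q) * B (r div q)) $$ (r mod q, c mod q) else 0)"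
    using mult_entry[OF A B, of "r div q" "r div q" "r mod q" "c mod q"] rc[OF r] rc[OF c] by auto
  also have "\<dots> = block_diag q (\<lambda>j. A j * B j) $$ (r,c)" using r c by (simp add: bd_entry)
  finally show "(block_diag q A * block_diag q B) $$ (r,c) = block_diag q (\<lambda>j. A j * B j) $$ (r,c)" .
qed auto

lemma bd_cong: "(\<And>j. j < q \<Longrightarrow> A j = B j) \<Longrightarrow> block_diag q A = block_diag q B"
  unfolding block_diag_def by (rule eq_matI) (auto simp: rc)

lemma bd_one: "block_diag q (\<lambda>_. 1\<^sub>m q) = 1\<^sub>m (q*q)"
proof (rule eq_matI)
  fix r c assume "r < dim_row (1\<^sub>m (q*q))" "c < dim_col (1\<^sub>m (q*q))"
  hence r: "r < q*q" and c: "c < q*q" by auto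
  have "(r div q = c div q \<and> r mod q = c mod q) \<longleftrightarrow> r = c" using rc[OF r] rc[OF c] by metis
  thus "block_diag q (\<lambda>_. 1\<^sub>m q) $$ (r,c) = 1\<^sub>m (q*q) $$ (r,c)"
    using r c rc[OF r] rc[OF c] by (auto simp: bd_entry)
qed (auto simp: block_diag_def)

lemma unitary_mult: assumes A: "unitary_mat n A" and B: "unitary_mat n B"
  shows "unitary_mat n (A*B)"
proof -
  have Ac: "A \<in> carrier_mat n n" and Bc: "B \<in> carrier_mat n n"
    and A1: "adj A * A = 1\<^sub>m n" and A2: "A * adj A = 1\<^sub>m n"
    and B1: "adj B * B = 1\<^sub>m n" and B2: "B * adj B = 1\<^sub>m n"
    using A B unfolding unitary_mat_def by auto
  have "adj (A*B) * (A*B) = adj B * (adj A * (A * B))"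
    by (simp add: adj_mult[OF Ac Bc] assoc_mult_mat[OF adj_carrier[OF Bc] adj_carrier[OF Ac] mult_carrier_mat[OF Ac Bc]])
  also have "\<dots> = adj B * ((adj A * A) * B)" by (simp add: assoc_mult_mat[symmetric, OF adj_carrier[OF Ac] Ac Bc])
  also have "\<dots> = 1\<^sub>m n" using A1 B1 Bc by simp
  finally have 1: "adj (A*B) * (A*B) = 1\<^sub>m n" .
  have "(A*B) * adj (A*B) = A * (B * (adj B * adj A))"
    by (simp add: adj_mult[OF Ac Bc] assoc_mult_mat[OF Ac Bc mult_carrier_mat[OF adj_carrier[OF Bc] adj_carrier[OF Ac]]])
  also have "\<dots> = A * ((B * adj B) * adj A)" by (simp add: assoc_mult_mat[symmetric, OF Bc adj_carrier[OF Bc] adj_carrier[OF Ac]])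
  also have "\<dots> = 1\<^sub>m n" using A2 B2 Ac by simp
  finally have 2: "(A*B) * adj (A*B) = 1\<^sub>m n" .
  show ?thesis using 1 2 Ac Bc unfolding unitary_mat_def by auto
qed

lemma adj_transpose: "adj (transpose_mat A) = transpose_mat (adj A)"
  by (rule eq_matI) (auto simp: adj_def)

lemma unitary_transpose: assumes A: "unitary_mat n A" shows "unitary_mat n (transpose_mat A)"
proof -
  have Ac: "A \<in> carrier_mat n n" and A1: "adj A * A = 1\<^sub>m n" and A2: "A * adj A = 1\<^sub>m n"
    using A unfolding unitary_mat_def by auto
  have "adj (transpose_mat A) * transpose_mat A = transpose_mat (A * adj A)"
    using transpose_mult[OF Ac adj_carrier[OF Ac]] by (simp add: adj_transpose)
  hence 1: "adj (transpose_mat A) * transpose_mat A = 1\<^sub>m n" using A2 by simp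
  have "transpose_mat A * adj (transpose_mat A) = transpose_mat (adj A * A)"
    using transpose_mult[OF adj_carrier[OF Ac] Ac] by (simp add: adj_transpose)
  hence 2: "transpose_mat A * adj (transpose_mat A) = 1\<^sub>m n" using A1 by simp
  show ?thesis using 1 2 Ac unfolding unitary_mat_def by auto
qed

lemma unitary_S: "unitary_mat (q*q) (swap_op q)"
  unfolding unitary_mat_def by (simp add: adj_S SS)

lemma unitary_bd: assumes "\<And>j. j < q \<Longrightarrow> unitary_mat q (A j)"
  shows "unitary_mat (q*q) (block_diag q A)"
proof -
  have Ac: "\<And>j. j < q \<Longrightarrow> A j \<in> carrier_mat q q" using assms unfolding unitary_mat_def by auto
  have Ac': "\<And>j. j < q \<Longrightarrow> adj (A j) \<in> carrier_mat q q" using Ac by auto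
  have "adj (block_diag q A) * block_diag q A = block_diag q (\<lambda>j. adj (A j) * A j)"
    by (simp add: adj_bd[OF Ac] bd_mult[OF Ac' Ac])
  also have "\<dots> = block_diag q (\<lambda>_. 1\<^sub>m q)" using assms unfolding unitary_mat_def by (intro bd_cong) auto
  finally have 1: "adj (block_diag q A) * block_diag q A = 1\<^sub>m (q*q)" by (simp add: bd_one)
  have "block_diag q A * adj (block_diag q A) = block_diag q (\<lambda>j. A j * adj (A j))"
    by (simp add: adj_bd[OF Ac] bd_mult[OF Ac Ac'])
  also have "\<dots> = block_diag q (\<lambda>_. 1\<^sub>m q)" using assms unfolding unitary_mat_def by (intro bd_cong) auto
  finally have 2: "block_diag q A * adj (block_diag q A) = 1\<^sub>m (q*q)" by (simp add: bd_one)
  show ?thesis using 1 2 unfolding unitary_mat_def by auto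
qed

lemma realign_SD: assumes U: "\<And>j. j < q \<Longrightarrow> U j \<in> carrier_mat q q"
  shows "realign q (swap_op q * block_diag q U) = swap_op q * block_diag q (\<lambda>j. transpose_mat (U j))"
proof (rule eq_matI)
  fix r c assume "r < dim_row (swap_op q * block_diag q (\<lambda>j. transpose_mat (U j)))"
    "c < dim_col (swap_op q * block_diag q (\<lambda>j. transpose_mat (U j)))"
  hence r: "r < q*q" and c: "c < q*q" by auto
  note R = rc[OF r] and C = rc[OF c]
  have "realign q (swap_op q * block_diag q U) $$ (r,c) = (swap_op q * block_diag q U) $$ ((c mod q)*q + r mod q, (c div q)*q + r div q)"
    using r c by (simp add: realign_def)
  also have "\<dots> = block_diag q U $$ (sw q ((c mod q)*q + r mod q), (c div q)*q + r div q)"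
    by (rule LS) (use R C lt_pair in auto)
  also have "\<dots> = (if r mod q = c div q then U (r mod q) $$ (c mod q, r div q) else 0)"
    using R C lt_pair[of "r mod q" q "c mod q"] lt_pair[of "c div q" q "r div q"]
    by (simp add: sw_def dm bd_entry)
  also have "\<dots> = block_diag q (\<lambda>j. transpose_mat (U j)) $$ (sw q r, c)"
    using r c R C sw_lt[OF r] U[of "r mod q"] unfolding sw_def by (auto simp: dm bd_entry2)
  also have "\<dots> = (swap_op q * block_diag q (\<lambda>j. transpose_mat (U j))) $$ (r,c)"
    by (rule LS[symmetric]) (use r c in auto)
  finally show "realign q (swap_op q * block_diag q U) $$ (r,c) = (swap_op q * block_diag q (\<lambda>j. transpose_mat (U j))) $$ (r,c)" .
qed (auto simp: realign_def)

lemma realign_DS: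
  shows "realign q (block_diag q U * swap_op q) = block_diag q U * swap_op q"
proof (rule eq_matI)
  fix r c assume "r < dim_row (block_diag q U * swap_op q)"
    "c < dim_col (block_diag q U * swap_op q)"
  hence r: "r < q*q" and c: "c < q*q" by auto
  note R = rc[OF r] and C = rc[OF c]
  have "realign q (block_diag q U * swap_op q) $$ (r,c) = (block_diag q U * swap_op q) $$ ((c mod q)*q + r mod q, (c div q)*q + r div q)"
    using r c by (simp add: realign_def)
  also have "\<dots> = block_diag q U $$ ((c mod q)*q + r mod q, sw q ((c div q)*q + r div q))"
    by (rule RS) (use R C lt_pair in auto)
  also have "\<dots> = (if r div q = c mod q then U (r div q) $$ (r mod q, c div q) else 0)"
    using R C lt_pair[of "r div q" q "c div q"] lt_pair[of "c mod q" q "r mod q"]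
    by (auto simp: sw_def dm bd_entry)
  also have "\<dots> = block_diag q U $$ (r, sw q c)"
    using r c R C sw_lt[OF c] unfolding sw_def by (auto simp: dm bd_entry1)
  also have "\<dots> = (block_diag q U * swap_op q) $$ (r,c)"
    by (rule RS[symmetric]) (use r c in auto)
  finally show "realign q (block_diag q U * swap_op q) $$ (r,c) = (block_diag q U * swap_op q) $$ (r,c)" .
qed (auto simp: realign_def)


lemma T_entry: "i<q \<Longrightarrow> j<q \<Longrightarrow> b<q \<Longrightarrow> b'<q \<Longrightarrow>
  tensor q a (1\<^sub>m q) $$ (i*q+b, j*q+b') = a $$ (i,j) * (if b = b' then 1 else 0)"
  using lt_pair[of i q b] lt_pair[of j q b'] by (simp add: tensor_def dm)

lemma sq_mult_carrier[simp]: "A \<in> carrier_mat n n \<Longrightarrow> B \<in> carrier_mat n n \<Longrightarrow> A*B \<in> carrier_mat n n"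
  by auto

lemmas assq = assoc_mult_mat[of _ "q*q" "q*q" _ "q*q" _ "q*q"] for q

lemma BTB: assumes A: "\<And>j. j<q \<Longrightarrow> A j \<in> carrier_mat q q" and C: "\<And>j. j<q \<Longrightarrow> C j \<in> carrier_mat q q"
  and r: "r < q*q" and c: "c < q*q"
  shows "(block_diag q A * tensor q a (1\<^sub>m q) * block_diag q C) $$ (r,c)
    = a $$ (r div q, c div q) * (A (r div q) * C (c div q)) $$ (r mod q, c mod q)"
proof -
  note R = rc[OF r] and Cc = rc[OF c]
  have "(block_diag q A * tensor q a (1\<^sub>m q) * block_diag q C) $$ (r,c)
    = (\<Sum>b<q. (block_diag q A * tensor q a (1\<^sub>m q)) $$ (r, (c div q)*q + b) * C (c div q) $$ (b, c mod q))"
    by (rule RD) (use r c in auto)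
  also have "\<dots> = (\<Sum>b<q. (a $$ (r div q, c div q) * A (r div q) $$ (r mod q, b)) * C (c div q) $$ (b, c mod q))"
  proof (rule sum.cong)
    fix b assume b: "b \<in> {..<q}"
    have "(block_diag q A * tensor q a (1\<^sub>m q)) $$ (r, (c div q)*q + b)
      = (\<Sum>b'<q. A (r div q) $$ (r mod q, b') * tensor q a (1\<^sub>m q) $$ ((r div q)*q + b', (c div q)*q + b))"
      by (rule LD[where m="q*q"]) (use r b Cc lt_pair in auto)
    also have "\<dots> = (\<Sum>b'<q. if b' = b then A (r div q) $$ (r mod q, b') * a $$ (r div q, c div q) else 0)"
      by (rule sum.cong) (use R Cc b in \<open>auto simp: T_entry\<close>)
    also have "\<dots> = a $$ (r div q, c div q) * A (r div q) $$ (r mod q, b)" using b by simp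
    finally show "(block_diag q A * tensor q a (1\<^sub>m q)) $$ (r, (c div q)*q + b) * C (c div q) $$ (b, c mod q)
      = (a $$ (r div q, c div q) * A (r div q) $$ (r mod q, b)) * C (c div q) $$ (b, c mod q)" by simp
  qed simp
  also have "\<dots> = a $$ (r div q, c div q) * (\<Sum>b<q. A (r div q) $$ (r mod q, b) * C (c div q) $$ (b, c mod q))"
    by (simp add: sum_distrib_left mult.assoc)
  also have "\<dots> = a $$ (r div q, c div q) * (A (r div q) * C (c div q)) $$ (r mod q, c mod q)"
    using mult_entry[OF A[of "r div q"] C[of "c div q"]] R Cc by simp
  finally show ?thesis .
qed

lemma M_dim[simp]: "dim_row (M_plus q V a) = q" "dim_col (M_plus q V a) = q"
  by (simp_all add: M_plus_def ptrace1_def)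

lemma M_entry: "x < q \<Longrightarrow> y < q \<Longrightarrow> M_plus q V a $$ (x,y) = (1 / of_nat q) * (\<Sum>i<q. (adj V * tensor q a (1\<^sub>m q) * V) $$ (i*q+x, i*q+y))"
  by (simp add: M_plus_def ptrace1_def)

lemma M_DS: assumes U: "\<And>j. j<q \<Longrightarrow> U j \<in> carrier_mat q q" and x: "x < q" and y: "y < q"
  shows "M_plus q (block_diag q U * swap_op q) a $$ (x,y) = ((1 / of_nat q) * tr (adj (U x) * U y)) * a $$ (x,y)"
proof -
  let ?D = "block_diag q U" and ?S = "swap_op q" and ?T = "tensor q a (1\<^sub>m q)" and ?A = "block_diag q (\<lambda>j. adj (U j))"
  have adjDS: "adj (?D * ?S) = ?S * ?A"
    by (simp add: adj_mult[OF bd_carrier S_carrier] adj_S adj_bd[OF U])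
  have X: "adj (?D * ?S) * ?T * (?D * ?S) = ?S * ((?A * ?T * ?D) * ?S)"
    unfolding adjDS by (simp add: assoc_mult_mat[of _ "q*q" "q*q" _ "q*q" _ "q*q"])
  have "(\<Sum>i<q. (adj (?D * ?S) * ?T * (?D * ?S)) $$ (i*q+x, i*q+y)) = (\<Sum>i<q. (?A * ?T * ?D) $$ (x*q+i, y*q+i))"
  proof (rule sum.cong)
    fix i assume i: "i \<in> {..<q}"
    have l1: "i*q+x < q*q" "i*q+y < q*q" "x*q+i < q*q" "y*q+i < q*q" using lt_pair i x y by auto
    have "(?S * ((?A * ?T * ?D) * ?S)) $$ (i*q+x, i*q+y) = ((?A * ?T * ?D) * ?S) $$ (sw q (i*q+x), i*q+y)"
      by (rule LS) (use l1 in auto)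
    also have "\<dots> = (?A * ?T * ?D) $$ (sw q (i*q+x), sw q (i*q+y))"
      by (rule RS) (use l1 sw_lt in auto)
    also have "\<dots> = (?A * ?T * ?D) $$ (x*q+i, y*q+i)" using i x y by (simp add: sw_def dm)
    finally show "(adj (?D * ?S) * ?T * (?D * ?S)) $$ (i*q+x, i*q+y) = (?A * ?T * ?D) $$ (x*q+i, y*q+i)"
      unfolding X .
  qed simp
  also have "\<dots> = (\<Sum>i<q. a $$ (x,y) * (adj (U x) * U y) $$ (i,i))"
  proof (rule sum.cong)
    fix i assume i: "i \<in> {..<q}"
    have l1: "x*q+i < q*q" "y*q+i < q*q" using lt_pair i x y by auto
    show "(?A * ?T * ?D) $$ (x*q+i, y*q+i) = a $$ (x,y) * (adj (U x) * U y) $$ (i,i)"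
      using BTB[of q "\<lambda>j. adj (U j)" U, OF _ U l1] U i by (simp add: dm)
  qed simp
  also have "\<dots> = a $$ (x,y) * tr (adj (U x) * U y)"
    using U[OF x] by (simp add: tr_def sum_distrib_left)
  finally show ?thesis using x y by (simp add: M_entry)
qed

lemma STS: "swap_op q * (tensor q a (1\<^sub>m q) * swap_op q) = block_diag q (\<lambda>_. a)"
proof (rule eq_matI)
  fix r c assume "r < dim_row (block_diag q (\<lambda>_. a))" "c < dim_col (block_diag q (\<lambda>_. a))"
  hence r: "r < q*q" and c: "c < q*q" by auto
  note R = rc[OF r] and C = rc[OF c]
  have "(swap_op q * (tensor q a (1\<^sub>m q) * swap_op q)) $$ (r,c) = (tensor q a (1\<^sub>m q) * swap_op q) $$ (sw q r, c)"
    by (rule LS) (use r c in auto)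
  also have "\<dots> = tensor q a (1\<^sub>m q) $$ (sw q r, sw q c)"
    by (rule RS[where m="q*q"]) (use r c sw_lt in auto)
  also have "\<dots> = block_diag q (\<lambda>_. a) $$ (r,c)"
    unfolding sw_def using R C r c by (simp add: T_entry bd_entry)
  finally show "(swap_op q * (tensor q a (1\<^sub>m q) * swap_op q)) $$ (r,c) = block_diag q (\<lambda>_. a) $$ (r,c)" .
qed auto

lemma M_SD: assumes U: "\<And>j. j<q \<Longrightarrow> U j \<in> carrier_mat q q" and a: "a \<in> carrier_mat q q"
  and x: "x < q" and y: "y < q"
  shows "M_plus q (swap_op q * block_diag q U) a $$ (x,y) = (1 / of_nat q) * (\<Sum>j<q. (adj (U j) * a * U j) $$ (x,y))"
proof -
  let ?D = "block_diag q U" and ?S = "swap_op q" and ?T = "tensor q a (1\<^sub>m q)" and ?A = "block_diag q (\<lambda>j. adj (U j))"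
  have adjSD: "adj (?S * ?D) = ?A * ?S"
    by (simp add: adj_mult[OF S_carrier bd_carrier] adj_S adj_bd[OF U])
  have "adj (?S * ?D) * ?T * (?S * ?D) = ?A * ((?S * (?T * ?S)) * ?D)"
    unfolding adjSD by (simp add: assoc_mult_mat[of _ "q*q" "q*q" _ "q*q" _ "q*q"])
  also have "\<dots> = ?A * (block_diag q (\<lambda>_. a) * ?D)" by (simp add: STS)
  also have "\<dots> = block_diag q (\<lambda>j. adj (U j) * (a * U j))"
    using U a by (simp add: bd_mult)
  finally have X: "adj (?S * ?D) * ?T * (?S * ?D) = block_diag q (\<lambda>j. adj (U j) * (a * U j))" .
  have "(\<Sum>i<q. (adj (?S * ?D) * ?T * (?S * ?D)) $$ (i*q+x, i*q+y)) = (\<Sum>j<q. (adj (U j) * a * U j) $$ (x,y))"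
    unfolding X
  proof (rule sum.cong)
    fix i assume i: "i \<in> {..<q}"
    have "adj (U i) * a * U i = adj (U i) * (a * U i)" using U[of i] a i by (simp add: assoc_mult_mat[of _ q q _ q _ q])
    thus "block_diag q (\<lambda>j. adj (U j) * (a * U j)) $$ (i*q+x, i*q+y) = (adj (U i) * a * U i) $$ (x,y)"
      using lt_pair[of i q x] lt_pair[of i q y] i x y by (simp add: bd_entry dm)
  qed simp
  thus ?thesis using x y by (simp add: M_entry)
qed


lemma superop_diag: assumes U: "\<And>j. j<q \<Longrightarrow> U j \<in> carrier_mat q q"
  shows "superop_mat q (M_plus q (block_diag q U * swap_op q)) =
    mat (q*q) (q*q) (\<lambda>(r,c). if r = c then (1 / of_nat q) * tr (adj (U (r div q)) * U (r mod q)) else 0)"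
proof (rule eq_matI)
  fix r c assume "r < dim_row (mat (q*q) (q*q) (\<lambda>(r,c). if r = c then (1 / of_nat q) * tr (adj (U (r div q)) * U (r mod q)) else 0))"
    "c < dim_col (mat (q*q) (q*q) (\<lambda>(r,c). if r = c then (1 / of_nat q) * tr (adj (U (r div q)) * U (r mod q)) else 0))"
  hence r: "r < q*q" and c: "c < q*q" by auto
  note R = rc[OF r] and C = rc[OF c]
  have "(r div q = c div q \<and> r mod q = c mod q) \<longleftrightarrow> r = c" using R C by metis
  then show "superop_mat q (M_plus q (block_diag q U * swap_op q)) $$ (r,c) =
    mat (q*q) (q*q) (\<lambda>(r,c). if r = c then (1 / of_nat q) * tr (adj (U (r div q)) * U (r mod q)) else 0) $$ (r,c)"
    using r c R C by (auto simp: superop_mat_def M_DS[OF U] mat_unit_def)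
qed (auto simp: superop_mat_def)

lemma prod_diag: "(\<Prod>a\<leftarrow>diag_mat (mat (q*q) (q*q) (\<lambda>(r,c). if r = c then f (r div q) (r mod q) else 0)). [:- a, 1:])
   = (\<Prod>(j,k) \<in> {..<q} \<times> {..<(q::nat)}. [:- f j k, 1:])"
proof -
  have "(\<Prod>a\<leftarrow>diag_mat (mat (q*q) (q*q) (\<lambda>(r,c). if r = c then f (r div q) (r mod q) else 0)). [:- a, 1:])
    = (\<Prod>i\<leftarrow>[0..<q*q]. [:- f (i div q) (i mod q), 1:])"
    unfolding diag_mat_def
    apply (simp add: comp_def)
    apply (intro arg_cong[where f=prod_list] map_cong refl)
    apply simp
    done
  also have "\<dots> = (\<Prod>i\<in>{..<q*q}. [:- f (i div q) (i mod q), 1:])"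
    by (simp add: prod.distinct_set_conv_list[symmetric] atLeast0LessThan)
  also have "\<dots> = (\<Prod>(j,k) \<in> {..<q} \<times> {..<(q::nat)}. [:- f j k, 1:])"
    unfolding prod_pairs by (rule prod.cong) (auto simp: dm)
  finally show ?thesis .
qed

theorem mainTheorem6:
  fixes q :: nat and U :: "nat \<Rightarrow> complex mat"
  assumes hq: "q \<ge> 2"
    and hU: "\<And>j. j < q \<Longrightarrow> unitary_mat q (U j)"
  defines "D \<equiv> block_diag q U"
    and "S \<equiv> swap_op q"
    and "lam \<equiv> (\<lambda>j k. (1 / of_nat q) * tr (adj (U j) * U k))"
  shows "dual_unitary q (S * D) \<and> dual_unitary q (D * S)
    \<and> (\<forall>a \<in> carrier_mat q q.
          M_plus q (D * S) a = mat q q (\<lambda>(j,k). lam j k * a $$ (j,k)))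
    \<and> (\<forall>a \<in> carrier_mat q q.
          M_plus q (S * D) a =
            mat q q (\<lambda>(x,y). (1 / of_nat q) * (\<Sum>j<q. (adj (U j) * a * U j) $$ (x,y))))
    \<and> char_poly (superop_mat q (M_plus q (D * S)))
        = (\<Prod>(j,k) \<in> {..<q} \<times> {..<q}. [:- lam j k, 1:])
    \<and> card {(j,k) \<in> {..<q} \<times> {..<q}. lam j k = 1} \<ge> q
    \<and> ((\<forall>j<q. \<forall>k<q. j \<noteq> k \<longrightarrow> tr (adj (U j) * U k) = 0) \<longrightarrow>
         card {(j,k) \<in> {..<q} \<times> {..<q}. lam j k = 1} = q
       \<and> card {(j,k) \<in> {..<q} \<times> {..<q}. lam j k = 0} = q * q - q)"

proof -
  have q0: "q > 0" using hq by simp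
  have Uc: "\<And>j. j < q \<Longrightarrow> U j \<in> carrier_mat q q" using hU unfolding unitary_mat_def by auto
  have uD: "unitary_mat (q*q) D" unfolding D_def by (rule unitary_bd[OF hU])
  have uS: "unitary_mat (q*q) S" unfolding S_def by (rule unitary_S)
  have du1: "dual_unitary q (S * D)"
    unfolding dual_unitary_def
  proof
    show "unitary_mat (q*q) (S*D)" by (rule unitary_mult[OF uS uD])
    have "unitary_mat (q*q) (swap_op q * block_diag q (\<lambda>j. transpose_mat (U j)))"
      by (rule unitary_mult[OF unitary_S unitary_bd]) (rule unitary_transpose[OF hU])
    thus "unitary_mat (q*q) (realign q (S*D))" using realign_SD[OF Uc] unfolding S_def D_def by simp
  qed
  have du2: "dual_unitary q (D * S)"
    unfolding dual_unitary_def D_def S_def realign_DS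
    using unitary_mult[OF uD uS] unfolding D_def S_def by simp
  have m1: "\<forall>a \<in> carrier_mat q q.
          M_plus q (D * S) a = mat q q (\<lambda>(j,k). lam j k * a $$ (j,k))"
  proof
    fix a :: "complex mat" assume a: "a \<in> carrier_mat q q"
    show "M_plus q (D * S) a = mat q q (\<lambda>(j,k). lam j k * a $$ (j,k))"
      by (rule eq_matI) (auto simp: D_def S_def lam_def M_DS[OF Uc])
  qed
  have m2: "\<forall>a \<in> carrier_mat q q.
          M_plus q (S * D) a =
            mat q q (\<lambda>(x,y). (1 / of_nat q) * (\<Sum>j<q. (adj (U j) * a * U j) $$ (x,y)))"
  proof
    fix a :: "complex mat" assume a: "a \<in> carrier_mat q q"
    show "M_plus q (S * D) a = mat q q (\<lambda>(x,y). (1 / of_nat q) * (\<Sum>j<q. (adj (U j) * a * U j) $$ (x,y)))"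
      by (rule eq_matI) (auto simp: D_def S_def M_SD[OF Uc a])
  qed
  have sd: "superop_mat q (M_plus q (D * S)) = mat (q*q) (q*q) (\<lambda>(r,c). if r = c then lam (r div q) (r mod q) else 0)"
    unfolding D_def S_def lam_def by (rule superop_diag[OF Uc])
  have cp: "char_poly (superop_mat q (M_plus q (D * S)))
        = (\<Prod>(j,k) \<in> {..<q} \<times> {..<q}. [:- lam j k, 1:])"
  proof -
    have "upper_triangular (superop_mat q (M_plus q (D * S)))"
      unfolding sd upper_triangular_def by auto
    moreover have "superop_mat q (M_plus q (D * S)) \<in> carrier_mat (q*q) (q*q)" unfolding sd by simp
    ultimately show ?thesis
      using char_poly_upper_triangular[of "superop_mat q (M_plus q (D * S))" "q*q"]
      unfolding sd prod_diag by simp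
  qed
  have ljj: "lam j j = 1" if j: "j < q" for j
  proof -
    have "adj (U j) * U j = 1\<^sub>m q" using hU[OF j] unfolding unitary_mat_def by auto
    hence "tr (adj (U j) * U j) = of_nat q" by (simp add: tr_def)
    thus ?thesis unfolding lam_def using q0 by simp
  qed
  let ?Dg = "(\<lambda>j. (j,j)) ` {..<q}"
  have cDg: "card ?Dg = q" by (subst card_image) (auto simp: inj_on_def)
  have sub: "?Dg \<subseteq> {(j,k) \<in> {..<q} \<times> {..<q}. lam j k = 1}" using ljj by auto
  have c1: "card {(j,k) \<in> {..<q} \<times> {..<q}. lam j k = 1} \<ge> q"
  proof -
    have fin: "finite {(j,k) \<in> {..<q} \<times> {..<q}. lam j k = 1}"
      by (rule finite_subset[of _ "{..<q} \<times> {..<q}"]) auto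
    show ?thesis using card_mono[OF fin sub] cDg by simp
  qed
  have c2: "card {(j,k) \<in> {..<q} \<times> {..<q}. lam j k = 1} = q
       \<and> card {(j,k) \<in> {..<q} \<times> {..<q}. lam j k = 0} = q * q - q"
    if orth: "\<forall>j<q. \<forall>k<q. j \<noteq> k \<longrightarrow> tr (adj (U j) * U k) = 0"
  proof -
    have off: "lam j k = 0" if "j<q" "k<q" "j \<noteq> k" for j k using orth that unfolding lam_def by simp
    have e1: "{(j,k) \<in> {..<q} \<times> {..<q}. lam j k = 1} = ?Dg"
    proof
      show "{(j,k) \<in> {..<q} \<times> {..<q}. lam j k = 1} \<subseteq> ?Dg"
      proof
        fix x assume x: "x \<in> {(j,k) \<in> {..<q} \<times> {..<q}. lam j k = 1}"
        obtain a b where ab: "x = (a,b)" "a < q" "b < q" "lam a b = 1" using x by auto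
        have "a = b"
        proof (rule ccontr)
          assume "a \<noteq> b"
          hence "lam a b = 0" using off ab by auto
          thus False using ab by simp
        qed
        thus "x \<in> ?Dg" using ab by auto
      qed
      show "?Dg \<subseteq> {(j,k) \<in> {..<q} \<times> {..<q}. lam j k = 1}" using ljj by auto
    qed
    have e2: "{(j,k) \<in> {..<q} \<times> {..<q}. lam j k = 0} = ({..<q} \<times> {..<q}) - ?Dg"
      using ljj off by auto
    have "card (({..<q} \<times> {..<q}) - ?Dg) = q*q - q"
      by (subst card_Diff_subset) (auto simp: cDg card_cartesian_product)
    thus ?thesis using e1 e2 cDg by simp
  qed
  show ?thesis using du1 du2 m1 m2 cp c1 c2 by blast
qed

end
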